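(* Let $k\ge 3$ and $s\geq k+2$ be integers, and let $A,B\ge1$ be real numbers with $B^k\leq A$. Then $\Xi(A,B)\ll A^{s-1}B^{s-k}$, with implicit constant depending only on $k,s$.
   Context: $\Xi(A,B)$ denotes the number of pairs $(\mathbf{a},\mathbf{x})$ with $\mathbf{a}\in(\mathbb{Z}\setminus\{0\})^s$, $\mathbf{x}\in\mathbb{Z}^s$, satisfying $a_1x_1^k+\dots+a_sx_s^k=0$ and $|\mathbf{a}|\le A$, $0<|\mathbf{x}|\le B$, where $|\mathbf{x}|=\max_j|x_j|$. *)

theory Defs
  imports "HOL-Analysis.Analysis"
begin

text \<open>Vectors in Z^s are represented as functions nat => int supported on {0..<s}.
  sup-norm: maximum of absolute values of the s coordinates.\<close>

definition supnorm :: "nat \<Rightarrow> (nat \<Rightarrow> int) \<Rightarrow> int" where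
  "supnorm s x = Max (insert 0 ((\<lambda>j. \<bar>x j\<bar>) ` {0..<s}))"

definition Xi_set :: "nat \<Rightarrow> nat \<Rightarrow> real \<Rightarrow> real \<Rightarrow> ((nat \<Rightarrow> int) \<times> (nat \<Rightarrow> int)) set" where
  "Xi_set k s A B = {(a, x).
      (\<forall>j. j \<ge> s \<longrightarrow> a j = 0 \<and> x j = 0) \<and>
      (\<forall>j<s. a j \<noteq> 0) \<and>
      (\<Sum>j<s. a j * x j ^ k) = 0 \<and>
      real_of_int (supnorm s a) \<le> A \<and>
      0 < supnorm s x \<and> real_of_int (supnorm s x) \<le> B}"

definition Xi :: "nat \<Rightarrow> nat \<Rightarrow> real \<Rightarrow> real \<Rightarrow> nat" where
  "Xi k s A B = card (Xi_set k s A B)"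

end

theory Submission
  imports Defs
begin


definition ibox :: "nat \<Rightarrow> int \<Rightarrow> (nat \<Rightarrow> int) set" where
  "ibox s r = {f. (\<forall>j<s. \<bar>f j\<bar> \<le> r) \<and> (\<forall>j\<ge>s. f j = 0)}"

lemma ibox_Suc:
  "ibox (Suc s) r = (\<lambda>(f,v). f(s:=v)) ` (ibox s r \<times> {-r..r})"
proof (intro set_eqI iffI)
  fix f assume f: "f \<in> ibox (Suc s) r"
  have "f = (\<lambda>(f,v). f(s:=v)) (f(s:=0), f s)" by auto
  moreover have "(f(s:=0), f s) \<in> ibox s r \<times> {-r..r}"
    using f by (auto simp: ibox_def)
  ultimately show "f \<in> (\<lambda>(f,v). f(s:=v)) ` (ibox s r \<times> {-r..r})" by blast
next
  fix f assume "f \<in> (\<lambda>(f,v). f(s:=v)) ` (ibox s r \<times> {-r..r})"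
  then show "f \<in> ibox (Suc s) r" by (auto simp: ibox_def less_Suc_eq)
qed

lemma ibox_card: "r \<ge> 0 \<Longrightarrow> finite (ibox s r) \<and> card (ibox s r) = nat (2*r+1) ^ s"
proof (induction s)
  case 0
  have "ibox 0 r = {\<lambda>_. 0}" by (auto simp: ibox_def)
  then show ?case by simp
next
  case (Suc s)
  have inj: "inj_on (\<lambda>(f,v). f(s:=v)) (ibox s r \<times> {-r..r})"
  proof (rule inj_onI, clarify)
    fix f v g w assume "f \<in> ibox s r" "g \<in> ibox s r" and eq: "f(s:=v) = g(s:=w)"
    then have "f s = 0" "g s = 0" by (auto simp: ibox_def)
    moreover have "v = w" using fun_cong[OF eq, of s] by simp
    moreover have "\<forall>j. j \<noteq> s \<longrightarrow> f j = g j" using eq by (metis fun_upd_other)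
    ultimately show "f = g \<and> v = w" by (metis ext)
  qed
  have "card {-r..r} = nat (2*r+1)" by simp
  then show ?case using Suc inj by (simp add: ibox_Suc card_image card_cartesian_product)
qed

lemma supnorm_le_iff:
  assumes "r \<ge> 0" shows "supnorm s x \<le> r \<longleftrightarrow> (\<forall>j<s. \<bar>x j\<bar> \<le> r)"
  using assms by (auto simp: supnorm_def)

lemma supnorm_ge: "j < s \<Longrightarrow> \<bar>x j\<bar> \<le> supnorm s x"
  unfolding supnorm_def by (rule Max_ge) auto

lemma supnorm_nonneg: "supnorm s x \<ge> 0"
  by (auto simp: supnorm_def)

lemma supnorm_attained:
  assumes "supnorm s x > 0" shows "\<exists>m<s. \<bar>x m\<bar> = supnorm s x"
proof -
  have "supnorm s x \<in> insert 0 ((\<lambda>j. \<bar>x j\<bar>) ` {0..<s})"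
    unfolding supnorm_def by (rule Max_in) auto
  then show ?thesis using assms by auto
qed

lemma supnorm_scale:
  assumes "d \<ge> 0" shows "supnorm s (\<lambda>j. d * x j) = d * supnorm s x"
proof -
  have "mono ((*) d :: int \<Rightarrow> int)" using assms by (auto simp: mono_def mult_left_mono)
  then have "d * supnorm s x = Max (((*) d) ` insert 0 ((\<lambda>j. \<bar>x j\<bar>) ` {0..<s}))"
    unfolding supnorm_def by (rule mono_Max_commute) auto
  also have "((*) d) ` insert 0 ((\<lambda>j. \<bar>x j\<bar>) ` {0..<s}) = insert 0 ((\<lambda>j. \<bar>d * x j\<bar>) ` {0..<s})"
    using assms by (auto simp: abs_mult image_image)
  finally show ?thesis by (simp add: supnorm_def)
qed

lemma supnorm_zero_iff:
  assumes "x \<in> ibox s r" shows "supnorm s x = 0 \<longleftrightarrow> x = (\<lambda>_. 0)"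
proof
  assume "supnorm s x = 0"
  then have "\<forall>j<s. \<bar>x j\<bar> \<le> 0" using supnorm_le_iff[of 0 s x] by simp
  then have "\<forall>j<s. x j = 0" by auto
  then show "x = (\<lambda>_. 0)" using assms unfolding ibox_def
    by (intro ext) (metis (mono_tags, lifting) linorder_not_le mem_Collect_eq)
next
  assume "x = (\<lambda>_. 0)" then show "supnorm s x = 0"
    using supnorm_le_iff[of 0 s x] supnorm_nonneg[of s x] by simp
qed



fun Gs :: "(nat \<Rightarrow> int) \<Rightarrow> nat \<Rightarrow> int" where
  "Gs x 0 = 0" | "Gs x (Suc n) = gcd (Gs x n) (x n)"

lemma Gs_dvd: "j < n \<Longrightarrow> Gs x n dvd x j"
  by (induction n) (auto simp: less_Suc_eq intro: dvd_trans)

lemma Gs_nonneg: "Gs x n \<ge> 0"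
  by (cases n) auto

lemma Gs_pos: "j < n \<Longrightarrow> x j \<noteq> 0 \<Longrightarrow> Gs x n > 0"
proof (induction n)
  case 0 then show ?case by simp
next
  case (Suc n)
  show ?case
  proof (cases "j < n")
    case True
    then have "Gs x n > 0" using Suc by auto
    then show ?thesis by (simp add: gcd_pos_int)
  next
    case False
    then have "j = n" using Suc by auto
    then show ?thesis using Suc by (simp add: gcd_pos_int)
  qed
qed

lemma Gs_comb: "\<exists>c. Gs x n = (\<Sum>j<n. c j * x j)"
proof (induction n)
  case 0 then show ?case by simp
next
  case (Suc n)
  then obtain c where c: "Gs x n = (\<Sum>j<n. c j * x j)" by blast
  obtain u v where uv: "u * Gs x n + v * x n = gcd (Gs x n) (x n)" using bezout_int by blast
  define c' where "c' = (\<lambda>j. if j = n then v else u * c j)"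
  have "(\<Sum>j<Suc n. c' j * x j) = (\<Sum>j<n. c' j * x j) + v * x n" by (simp add: c'_def)
  also have "(\<Sum>j<n. c' j * x j) = u * (\<Sum>j<n. c j * x j)"
    by (simp add: c'_def sum_distrib_left mult.assoc)
  finally have "(\<Sum>j<Suc n. c' j * x j) = Gs x (Suc n)" using uv c by simp
  then show ?case by metis
qed

lemma Gs_pow: "k > 0 \<Longrightarrow> Gs (\<lambda>j. x j ^ k) n = Gs x n ^ k"
proof (induction n)
  case 0 then show ?case by simp
next
  case (Suc n)
  then show ?case by (simp del: gcd_exp add: gcd_exp[symmetric])
qed



lemma witness:
  fixes y c :: "nat \<Rightarrow> int"
  assumes m: "m < s" and Y: "\<bar>y m\<bar> = Y" "Y > 0" and yb: "\<forall>j<s. \<bar>y j\<bar> \<le> Y" and YP: "Y \<le> P"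
    and gc: "g = (\<Sum>j<s. c j * y j)" and t: "\<bar>t\<bar> * g \<le> P * Y" and gpos: "g > 0"
  shows "\<exists>w \<in> ibox s ((int s + 1) * P). (\<Sum>j<s. w j * y j) = t * g"
proof -
  define b where "b j = (if j < s \<and> j \<noteq> m then (t * c j) mod Y else 0)" for j
  define R where "R = (\<Sum>j<s. b j * y j)"
  have "t * g - R = (\<Sum>j<s. (t * c j - b j) * y j)"
    by (simp add: gc R_def sum_distrib_left sum_subtractf algebra_simps)
  moreover have "y m dvd (\<Sum>j<s. (t * c j - b j) * y j)"
  proof (rule dvd_sum)
    fix j assume "j \<in> {..<s}"
    show "y m dvd (t * c j - b j) * y j"
    proof (cases "j = m")
      case True then show ?thesis by simp
    next
      case False
      then have "t * c j - b j = Y * (t * c j div Y)"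
        using \<open>j \<in> {..<s}\<close> by (simp add: b_def minus_mod_eq_mult_div)
      moreover have "y m dvd Y" using Y by auto
      ultimately show ?thesis by simp
    qed
  qed
  ultimately have dv: "y m dvd (t * g - R)" by simp
  define q where "q = (t * g - R) div y m"
  have qy: "q * y m = t * g - R" using dv by (simp add: q_def)
  define w where "w = b(m := q)"
  have bm: "b m = 0" by (simp add: b_def)
  have "\<forall>j. w j * y j = b j * y j + (if j = m then q * y m else 0)"
    using bm by (simp add: w_def)
  then have "(\<Sum>j<s. w j * y j) = R + (\<Sum>j<s. (if j = m then q * y m else 0))"
    by (simp add: R_def sum.distrib)
  also have "\<dots> = t * g" using m qy by simp
  finally have sumw: "(\<Sum>j<s. w j * y j) = t * g" .
  have Pnn: "P \<ge> 0" using YP Y by simp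
  have bb: "0 \<le> b j \<and> b j \<le> Y" for j
    using Y by (auto simp: b_def intro: less_imp_le)
  have "\<bar>R\<bar> \<le> (\<Sum>j<s. \<bar>b j * y j\<bar>)" unfolding R_def by (rule sum_abs)
  also have "\<dots> \<le> (\<Sum>j<s. Y * Y)"
  proof (rule sum_mono)
    fix j assume "j \<in> {..<s}"
    then show "\<bar>b j * y j\<bar> \<le> Y * Y" using bb[of j] yb
      by (simp add: abs_mult mult_mono)
  qed
  also have "\<dots> = int s * Y * Y" by simp
  also have "\<dots> \<le> int s * P * Y" using YP Y by (simp add: mult_right_mono mult_left_mono)
  finally have Rb: "\<bar>R\<bar> \<le> int s * P * Y" .
  have "\<bar>q\<bar> * Y = \<bar>t * g - R\<bar>" using qy Y by (metis abs_mult)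
  also have "\<dots> \<le> \<bar>t\<bar> * g + \<bar>R\<bar>" using abs_triangle_ineq4[of "t*g" R] gpos by (simp add: abs_mult)
  also have "\<dots> \<le> ((int s + 1) * P) * Y" using t Rb by (simp add: algebra_simps)
  finally have "\<bar>q\<bar> \<le> (int s + 1) * P" using Y by simp
  moreover have "\<forall>j<s. j \<noteq> m \<longrightarrow> \<bar>b j\<bar> \<le> (int s + 1) * P"
  proof (intro allI impI)
    fix j assume "j < s" "j \<noteq> m"
    have "\<bar>b j\<bar> \<le> P" using bb[of j] YP by simp
    also have "P \<le> (int s + 1) * P" using Pnn by (simp add: algebra_simps)
    finally show "\<bar>b j\<bar> \<le> (int s + 1) * P" .
  qed
  ultimately have "w \<in> ibox s ((int s + 1) * P)"
    using m by (auto simp: ibox_def w_def b_def)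
  then show ?thesis using sumw by blast
qed

lemma core:
  fixes y c :: "nat \<Rightarrow> int"
  assumes m: "m < s" and Y: "\<bar>y m\<bar> = Y" "Y > 0" and yb: "\<forall>j<s. \<bar>y j\<bar> \<le> Y" and YP: "Y \<le> P"
    and gc: "g = (\<Sum>j<s. c j * y j)" and gpos: "g > 0"
  shows "real (card {a \<in> ibox s P. (\<Sum>j<s. a j * y j) = 0})
          \<le> real_of_int ((2*((int s + 2)*P)+1)^s) * g / (P * Y)"
proof -
  define S where "S = {a \<in> ibox s P. (\<Sum>j<s. a j * y j) = 0}"
  define T where "T = P * Y div g"
  define L where "L = {-T..T}"
  have Pp: "P > 0" using Y YP by simp
  have T0: "T \<ge> 0" using Pp Y gpos by (simp add: T_def pos_imp_zdiv_nonneg_iff)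
  have "\<forall>t\<in>L. \<exists>w \<in> ibox s ((int s + 1) * P). (\<Sum>j<s. w j * y j) = t * g"
  proof
    fix t assume "t \<in> L"
    then have "\<bar>t\<bar> \<le> T" by (auto simp: L_def)
    then have "\<bar>t\<bar> * g \<le> T * g" using gpos by (simp add: mult_right_mono)
    also have "T * g \<le> P * Y" unfolding T_def
      using div_mult_mod_eq[of "P*Y" g] pos_mod_sign[OF gpos, of "P*Y"] by linarith
    finally show "\<exists>w \<in> ibox s ((int s + 1) * P). (\<Sum>j<s. w j * y j) = t * g"
      by (rule witness[OF m Y yb YP gc _ gpos])
  qed
  then obtain W where W: "\<And>t. t \<in> L \<Longrightarrow> W t \<in> ibox s ((int s + 1) * P) \<and> (\<Sum>j<s. W t j * y j) = t * g"
    by metis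
  define f where "f = (\<lambda>(a::nat\<Rightarrow>int, t). (\<lambda>j. a j + W t j))"
  have val: "(\<Sum>j<s. f (a, t) j * y j) = t * g" if "a \<in> S" "t \<in> L" for a t
    using that W[of t] by (simp add: f_def S_def algebra_simps sum.distrib)
  have inj: "inj_on f (S \<times> L)"
  proof (rule inj_onI, clarify)
    fix a t a' t' assume as: "a \<in> S" "t \<in> L" "a' \<in> S" "t' \<in> L" and eq: "f (a, t) = f (a', t')"
    have "t * g = t' * g" using val[OF as(1,2)] val[OF as(3,4)] eq by metis
    then have tt: "t = t'" using gpos by (metis less_irrefl mult_right_cancel)
    have "a = a'"
    proof
      fix j show "a j = a' j" using fun_cong[OF eq, of j] tt by (simp add: f_def)
    qed
    then show "a = a' \<and> t = t'" using tt by simp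
  qed
  have img: "f ` (S \<times> L) \<subseteq> ibox s ((int s + 2) * P)"
  proof clarify
    fix a t assume "a \<in> S" "t \<in> L"
    then have "a \<in> ibox s P" "W t \<in> ibox s ((int s + 1) * P)" using W by (auto simp: S_def)
    then show "f (a, t) \<in> ibox s ((int s + 2) * P)"
      apply (clarsimp simp: ibox_def f_def algebra_simps)
      subgoal for j using abs_triangle_ineq[of "a j" "W t j"] by (smt (verit))
      done
  qed
  have fin: "finite (ibox s ((int s + 2) * P))" and cb: "card (ibox s ((int s + 2) * P)) = nat (2*((int s + 2)*P)+1) ^ s"
    using ibox_card[of "(int s + 2) * P" s] Pp by auto
  have "card (S \<times> L) \<le> card (ibox s ((int s + 2) * P))"
    using card_inj_on_le[OF inj img fin] .
  moreover have "card L = nat (2*T+1)" using T0 by (simp add: L_def)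
  ultimately have natineq: "card S * nat (2*T+1) \<le> nat (2*((int s + 2)*P)+1) ^ s"
    using cb by (simp add: card_cartesian_product)
  have ineq: "real (card S) * (2*T+1) \<le> real_of_int ((2*((int s + 2)*P)+1)^s)"
  proof -
    have "real (card S * nat (2*T+1)) \<le> real (nat (2*((int s + 2)*P)+1) ^ s)"
      using natineq by (simp only: of_nat_le_iff)
    moreover have "0 \<le> 2*((int s + 2)*P)+1" using Pp by simp
    ultimately show ?thesis using T0 by (simp add: of_nat_nat)
  qed
  have e1: "T * g + P*Y mod g = P*Y" unfolding T_def by (rule div_mult_mod_eq)
  have e2: "P*Y mod g < g" using pos_mod_bound gpos by blast
  have e3: "(T+1)*g = T*g + g" by (simp add: algebra_simps)
  have "P * Y < (T + 1) * g" using e1 e2 e3 by linarith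
  moreover have "(T + 1) * g \<le> (2*T+1) * g" using T0 gpos by (simp add: mult_right_mono)
  ultimately have "P * Y \<le> (2*T+1) * g" by linarith
  then have "real_of_int (P * Y) \<le> real_of_int ((2*T+1) * g)" by (simp only: of_int_le_iff)
  then have "real_of_int (P * Y) / g \<le> 2*T+1" using gpos
    by (simp add: divide_le_eq)
  then have "real (card S) * (real_of_int (P * Y) / g) \<le> real_of_int ((2*((int s + 2)*P)+1)^s)"
    using ineq by (meson mult_left_mono of_nat_0_le_iff order_trans)
  then show ?thesis using gpos Pp Y unfolding S_def
    by (simp add: field_simps)
qed



lemma powdiff: fixes a b :: real assumes "0 \<le> b" "b \<le> a"
  shows "a^n - b^n \<le> n * (a - b) * a^(n-1)"
proof (induction n)
  case 0 then show ?case by simp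
next
  case (Suc n)
  have "a^Suc n - b^Suc n = a * (a^n - b^n) + (a - b) * b^n" by (simp add: algebra_simps)
  also have "\<dots> \<le> a * (n * (a - b) * a^(n-1)) + (a - b) * a^n"
    using Suc assms by (intro add_mono mult_left_mono power_mono) auto
  also have "\<dots> = (Suc n) * (a - b) * a^n"
    by (cases n) (auto simp: algebra_simps)
  finally show ?case by simp
qed

lemma ibox_mono: "r \<le> r' \<Longrightarrow> ibox s r \<subseteq> ibox s r'"
  by (auto simp: ibox_def)

lemma shell:
  assumes k: "k \<ge> 1" and s: "s \<ge> k + 1"
  shows "(\<Sum>z \<in> ibox s (int T) - {\<lambda>_. 0}. 1 / real_of_int (supnorm s z) ^ k)
           \<le> 2 * s * 3^(s-1) * real T ^ (s-k)"
proof (induction T)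
  case 0
  have E: "ibox s (int 0) - {\<lambda>_. 0} = {}"
    using supnorm_zero_iff[of _ s 0] supnorm_le_iff[of 0 s] supnorm_nonneg[of s]
    by (auto simp: ibox_def) (metis antisym)
  have "0 < s - k" using s by simp
  then show ?case by (simp only: E sum.empty) simp
next
  case (Suc T)
  define c :: real where "c = 2 * s * 3^(s-1)"
  define e where "e = s - k"
  have e1: "e \<ge> 1" using s by (simp add: e_def)
  define Sm where "Sm = ibox s (int T) - {\<lambda>_. 0}"
  define Sh where "Sh = ibox s (int T + 1) - ibox s (int T)"
  have finb: "finite (ibox s (int T + 1))" "finite (ibox s (int T))"
    using ibox_card by auto
  have split0: "ibox s (int T + 1) - {\<lambda>_. 0} = Sm \<union> Sh"
  proof -
    have "(\<lambda>_. 0) \<in> ibox s (int T)" by (simp add: ibox_def)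
    then show ?thesis using ibox_mono[of "int T" "int T + 1" s] by (auto simp: Sm_def Sh_def)
  qed
  have split: "ibox s (int (Suc T)) - {\<lambda>_. 0} = Sm \<union> Sh"
    using split0 by (simp add: add.commute)
  have disj: "Sm \<inter> Sh = {}" by (auto simp: Sm_def Sh_def)
  have fins: "finite Sm" "finite Sh" using finb by (auto simp: Sm_def Sh_def)
  have nrm: "supnorm s z = int T + 1" if "z \<in> Sh" for z
  proof -
    have z1: "z \<in> ibox s (int T + 1)" and z2: "z \<notin> ibox s (int T)" using that by (auto simp: Sh_def)
    have "supnorm s z \<le> int T + 1" using z1 supnorm_le_iff[of "int T + 1" s z] by (auto simp: ibox_def)
    moreover obtain j where "j < s" "\<bar>z j\<bar> > int T" using z1 z2 by (auto simp: ibox_def)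
    then have "supnorm s z \<ge> int T + 1" using supnorm_ge[of j s z] by linarith
    ultimately show ?thesis by simp
  qed
  have cardSh: "card Sh = (2*T+3)^s - (2*T+1)^s"
  proof -
    have "card Sh = card (ibox s (int T + 1)) - card (ibox s (int T))"
      unfolding Sh_def using finb ibox_mono[of "int T" "int T + 1" s] by (simp add: card_Diff_subset)
    also have "\<dots> = (2*T+3)^s - (2*T+1)^s"
      using ibox_card[of "int T + 1" s] ibox_card[of "int T" s] by (simp add: nat_add_distrib nat_mult_distrib add.commute)
    finally show ?thesis .
  qed
  have "real (card Sh) = real (2*T+3)^s - real (2*T+1)^s"
    unfolding cardSh by (simp add: of_nat_diff power_mono)
  also have "\<dots> \<le> s * (real (2*T+3) - real (2*T+1)) * real (2*T+3)^(s-1)"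
    by (rule powdiff) auto
  also have "\<dots> = 2 * s * real (2*T+3)^(s-1)" by simp
  also have "\<dots> \<le> 2 * s * (3 * (real T + 1))^(s-1)"
    by (intro mult_left_mono power_mono) auto
  also have "\<dots> = c * (real T + 1)^(s-1)" by (simp only: c_def power_mult_distrib of_nat_mult of_nat_power of_nat_numeral mult.assoc)
  finally have cb: "real (card Sh) \<le> c * (real T + 1)^(s-1)" .
  have "(\<Sum>z\<in>Sh. 1 / real_of_int (supnorm s z) ^ k) = real (card Sh) / (real T + 1)^k"
    using nrm by (simp add: divide_inverse)
  also have "\<dots> \<le> c * (real T + 1)^(s-1) / (real T + 1)^k"
    using cb by (simp add: divide_right_mono)
  also have "\<dots> = c * (real T + 1)^(e-1)"
  proof -
    have "(real T + 1)^(s-1) = (real T + 1)^(e-1) * (real T + 1)^k"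
      using s by (simp add: e_def power_add[symmetric])
    then show ?thesis by simp
  qed
  finally have shb: "(\<Sum>z\<in>Sh. 1 / real_of_int (supnorm s z) ^ k) \<le> c * (real T + 1)^(e-1)" .
  have IH: "(\<Sum>z\<in>Sm. 1 / real_of_int (supnorm s z) ^ k) \<le> c * real T ^ e"
    using Suc.IH by (simp add: Sm_def c_def e_def)
  have "real T ^ e = real T * real T ^ (e-1)" using e1 by (metis power_eq_if not_one_le_zero)
  also have "\<dots> \<le> real T * (real T + 1)^(e-1)" by (intro mult_left_mono power_mono) auto
  finally have "real T ^ e + (real T + 1)^(e-1) \<le> (real T + 1) * (real T + 1)^(e-1)"
    by (simp add: algebra_simps)
  also have "\<dots> = (real T + 1)^e" using e1 by (metis power_eq_if not_one_le_zero)
  finally have pw: "real T ^ e + (real T + 1)^(e-1) \<le> (real T + 1)^e" .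
  have c0: "c \<ge> 0" by (simp add: c_def)
  have "(\<Sum>z \<in> ibox s (int (Suc T)) - {\<lambda>_. 0}. 1 / real_of_int (supnorm s z) ^ k)
       = (\<Sum>z\<in>Sm. 1 / real_of_int (supnorm s z) ^ k) + (\<Sum>z\<in>Sh. 1 / real_of_int (supnorm s z) ^ k)"
    unfolding split by (rule sum.union_disjoint[OF fins disj])
  also have "\<dots> \<le> c * real T ^ e + c * (real T + 1)^(e-1)" using IH shb by simp
  also have "\<dots> \<le> c * (real T + 1)^e" using pw c0 by (metis distrib_left mult_left_mono)
  finally show ?case by (simp add: c_def e_def add.commute)
qed



lemma inv_sq_sum: "(\<Sum>d=1..n. 1 / real d ^ 2) \<le> 2 - 1 / real n" if "n \<ge> 1" for n :: nat
  using that
proof (induction n rule: dec_induct)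
  case base then show ?case by simp
next
  case (step n)
  have "1 / real (Suc n) ^ 2 \<le> 1 / (real n * real (Suc n))"
    using step(1) by (intro divide_left_mono) (auto simp: power2_eq_square)
  also have "\<dots> = 1 / real n - 1 / real (Suc n)" using step(1) by (simp add: field_simps)
  finally have "1 / real (Suc n) ^ 2 \<le> 1 / real n - 1 / real (Suc n)" .
  then show ?case using step(3) by simp
qed

lemma inv_sq_sum2: "(\<Sum>d=1..n. 1 / real d ^ 2) \<le> 2" for n :: nat
proof (cases "n \<ge> 1")
  case True then show ?thesis using inv_sq_sum[OF True] by (smt (verit) divide_nonneg_nonneg of_nat_0_le_iff)
next
  case False then show ?thesis by simp
qed

lemma nonzero_coord:
  assumes "x \<in> ibox s r" "x \<noteq> (\<lambda>_. 0)" shows "\<exists>j<s. x j \<noteq> 0"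
  using assms by (auto simp: ibox_def) (metis ext linorder_not_le)

lemma perx:
  fixes P Q :: int
  assumes k: "k \<ge> 1" and P: "Q ^ k \<le> P" and Q: "Q \<ge> 1" and x: "x \<in> ibox s Q - {\<lambda>_. 0}"
  shows "real (card {a \<in> ibox s P. (\<Sum>j<s. a j * x j ^ k) = 0})
          \<le> (2 * real s + 5)^s * real_of_int P ^ (s - 1) * (real_of_int (Gs x s) / real_of_int (supnorm s x)) ^ k"
proof -
  have xb: "x \<in> ibox s Q" and xn: "x \<noteq> (\<lambda>_. 0)" using x by auto
  define X where "X = supnorm s x"
  have X0: "X > 0" using supnorm_zero_iff[OF xb] supnorm_nonneg[of s x] xn by (simp add: X_def)
  obtain m where m: "m < s" "\<bar>x m\<bar> = X" using supnorm_attained[of s x] X0 by (auto simp: X_def)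
  have XQ: "X \<le> Q" using xb supnorm_le_iff[of Q s x] Q by (auto simp: ibox_def X_def)
  define y where "y = (\<lambda>j. x j ^ k)"
  define Y where "Y = X ^ k"
  have Y0: "Y > 0" using X0 by (simp add: Y_def)
  have ym: "\<bar>y m\<bar> = Y" using m unfolding y_def Y_def by (metis power_abs)
  have yb: "\<forall>j<s. \<bar>y j\<bar> \<le> Y"
  proof (intro allI impI)
    fix j assume "j < s"
    then have "\<bar>x j\<bar> \<le> X" using supnorm_ge[of j s x] by (simp add: X_def)
    then have "\<bar>x j\<bar> ^ k \<le> X ^ k" by (rule power_mono) simp
    then show "\<bar>y j\<bar> \<le> Y" by (simp add: y_def Y_def power_abs)
  qed
  have YP: "Y \<le> P"
    using power_mono[OF XQ, of k] X0 P unfolding Y_def by linarith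
  obtain c where gc: "Gs y s = (\<Sum>j<s. c j * y j)" using Gs_comb by blast
  have gpos: "Gs y s > 0" using Gs_pos[of m s y] m X0 by (simp add: y_def)
  have gpow: "Gs y s = Gs x s ^ k" using Gs_pow[of k x s] k by (simp add: y_def)
  have Pp: "P > 0" using YP Y0 by simp
  have "real (card {a \<in> ibox s P. (\<Sum>j<s. a j * y j) = 0})
          \<le> real_of_int ((2*((int s + 2)*P)+1)^s) * Gs y s / (P * Y)"
    by (rule core[OF m(1) ym Y0 yb YP gc gpos])
  also have "\<dots> \<le> ((2 * real s + 5) * P)^s * Gs y s / (P * Y)"
  proof -
    have "real_of_int (2*((int s + 2)*P)+1) \<le> (2 * real s + 5) * P" using Pp by (simp add: algebra_simps)
    then have "real_of_int ((2*((int s + 2)*P)+1)^s) \<le> ((2 * real s + 5) * P)^s"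
      unfolding of_int_power by (rule power_mono) (use Pp in simp)
    then show ?thesis using gpos Pp Y0 by (intro divide_right_mono mult_right_mono) auto
  qed
  also have "\<dots> = (2 * real s + 5)^s * real_of_int P ^ (s - 1) * (real_of_int (Gs x s) / X) ^ k"
  proof -
    have s1: "s \<ge> 1" using m by simp
    have "real_of_int P ^ s = P * P ^ (s-1)" using s1 by (cases s) auto
    then show ?thesis using Pp X0 by (simp add: gpow Y_def power_mult_distrib power_divide)
  qed
  finally show ?thesis by (simp add: y_def X_def)
qed


lemma scaled_set:
  assumes d: "d > 0"
  shows "{x \<in> ibox s Q - {\<lambda>_. 0}. \<forall>j<s. d dvd x j} = (\<lambda>z j. d * z j) ` (ibox s (Q div d) - {\<lambda>_. 0})"
proof (intro set_eqI iffI)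
  fix x assume "x \<in> {x \<in> ibox s Q - {\<lambda>_. 0}. \<forall>j<s. d dvd x j}"
  then have xb: "x \<in> ibox s Q" and xn: "x \<noteq> (\<lambda>_. 0)" and dv: "\<forall>j<s. d dvd x j" by auto
  define z where "z = (\<lambda>j. x j div d)"
  have xz: "x = (\<lambda>j. d * z j)"
  proof
    fix j show "x j = d * z j"
    proof (cases "j < s")
      case True then show ?thesis using dv by (simp add: z_def)
    next
      case False then have "x j = 0" using xb by (simp add: ibox_def)
      then show ?thesis by (simp add: z_def)
    qed
  qed
  have "z \<in> ibox s (Q div d)"
  proof -
    have "\<bar>z j\<bar> \<le> Q div d" if "j < s" for j
    proof -
      have "\<bar>z j\<bar> * d \<le> Q" using xb that xz d
        by (auto simp: ibox_def abs_mult) (metis abs_of_pos mult.commute)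
      then have "(\<bar>z j\<bar> * d) div d \<le> Q div d" using d by (rule zdiv_mono1)
      then show ?thesis using d by simp
    qed
    moreover have "\<forall>j\<ge>s. z j = 0" using xb by (simp add: ibox_def z_def)
    ultimately show ?thesis by (simp add: ibox_def)
  qed
  moreover have "z \<noteq> (\<lambda>_. 0)" using xn xz by auto
  ultimately show "x \<in> (\<lambda>z j. d * z j) ` (ibox s (Q div d) - {\<lambda>_. 0})" using xz by blast
next
  fix x assume "x \<in> (\<lambda>z j. d * z j) ` (ibox s (Q div d) - {\<lambda>_. 0})"
  then obtain z where z: "z \<in> ibox s (Q div d)" "z \<noteq> (\<lambda>_. 0)" and xz: "x = (\<lambda>j. d * z j)" by blast
  have "\<bar>x j\<bar> \<le> Q" if "j < s" for j
  proof -
    have "\<bar>z j\<bar> \<le> Q div d" using z that by (simp add: ibox_def)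
    then have "d * \<bar>z j\<bar> \<le> d * (Q div d)" using d by (simp add: mult_left_mono)
    also have "\<dots> \<le> Q" using d by (metis mult.commute div_mult_mod_eq pos_mod_sign le_add_same_cancel1 less_le)
    finally show ?thesis using d by (simp add: xz abs_mult)
  qed
  moreover have "\<forall>j\<ge>s. x j = 0" using z by (simp add: ibox_def xz)
  moreover have "x \<noteq> (\<lambda>_. 0)"
  proof
    assume "x = (\<lambda>_. 0)"
    then have "\<forall>j. z j = 0" using xz d by (metis mult_eq_0_iff less_irrefl)
    then show False using z by auto
  qed
  ultimately show "x \<in> {x \<in> ibox s Q - {\<lambda>_. 0}. \<forall>j<s. d dvd x j}" using xz by (auto simp: ibox_def)
qed


lemma gcd_sum:
  assumes k: "k \<ge> 1" and s: "s \<ge> k + 2" and Q: "Q \<ge> 1"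
  shows "(\<Sum>x \<in> ibox s Q - {\<lambda>_. 0}. (real_of_int (Gs x s) / real_of_int (supnorm s x)) ^ k)
          \<le> 2 * (2 * s * 3^(s-1)) * real_of_int Q ^ (s-k)"
proof -
  define c :: real where "c = 2 * s * 3^(s-1)"
  define E where "E = ibox s Q - {\<lambda>_. 0}"
  define h where "h = (\<lambda>(d::nat) x. if \<forall>j<s. int d dvd x j then (real d / real_of_int (supnorm s x)) ^ k else 0)"
  have finE: "finite E" using ibox_card[of Q s] Q by (simp add: E_def)
  have hnn: "h d x \<ge> 0" for d x by (simp add: h_def supnorm_nonneg)
  have step1: "(real_of_int (Gs x s) / real_of_int (supnorm s x)) ^ k \<le> (\<Sum>d\<in>{1..nat Q}. h d x)" if "x \<in> E" for x
  proof -
    have xb: "x \<in> ibox s Q" and xn: "x \<noteq> (\<lambda>_. 0)" using that by (auto simp: E_def)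
    obtain j where j: "j < s" "x j \<noteq> 0" using nonzero_coord[OF xb xn] by blast
    define G where "G = Gs x s"
    have G0: "G > 0" using Gs_pos[of j s x] j by (simp add: G_def)
    have "G \<le> \<bar>x j\<bar>" using dvd_imp_le_int[OF j(2) Gs_dvd[OF j(1), of x]] G0 by (simp add: G_def)
    also have "\<bar>x j\<bar> \<le> Q" using xb j by (simp add: ibox_def)
    finally have GQ: "G \<le> Q" .
    have mem: "nat G \<in> {1..nat Q}" using G0 GQ by auto
    have "h (nat G) x = (real_of_int G / real_of_int (supnorm s x)) ^ k"
      using G0 Gs_dvd[of _ s x] by (simp add: h_def G_def)
    then have "(real_of_int (Gs x s) / real_of_int (supnorm s x)) ^ k = h (nat G) x" by (simp add: G_def)
    also have "\<dots> \<le> (\<Sum>d\<in>{1..nat Q}. h d x)" by (rule member_le_sum[OF mem]) (auto simp: hnn)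
    finally show ?thesis .
  qed
  have step3: "(\<Sum>x\<in>E. h d x) \<le> c * real_of_int Q ^ (s-k) / real d ^ 2" if d: "d \<in> {1..nat Q}" for d
  proof -
    have d0: "int d > 0" using d by simp
    define T where "T = nat (Q div int d)"
    have Tq: "int T = Q div int d" using Q d0 by (simp add: T_def pos_imp_zdiv_nonneg_iff)
    have "(\<Sum>x\<in>E. h d x) = (\<Sum>x\<in>{x\<in>E. \<forall>j<s. int d dvd x j}. (real d / real_of_int (supnorm s x)) ^ k)"
      by (simp add: sum.inter_filter[OF finE] h_def)
    also have "{x\<in>E. \<forall>j<s. int d dvd x j} = (\<lambda>z j. int d * z j) ` (ibox s (int T) - {\<lambda>_. 0})"
      unfolding E_def Tq by (rule scaled_set[OF d0])
    also have "(\<Sum>x\<in>(\<lambda>z j. int d * z j) ` (ibox s (int T) - {\<lambda>_. 0}). (real d / real_of_int (supnorm s x)) ^ k)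
        = (\<Sum>z\<in>ibox s (int T) - {\<lambda>_. 0}. (real d / real_of_int (supnorm s (\<lambda>j. int d * z j))) ^ k)"
    proof (rule sum.reindex[unfolded comp_def])
      show "inj_on (\<lambda>z j. int d * z j) (ibox s (int T) - {\<lambda>_. 0})"
      proof (rule inj_onI)
        fix z w assume "(\<lambda>j. int d * z j) = (\<lambda>j. int d * w j)"
        then have "\<forall>j. int d * z j = int d * w j" by metis
        then show "z = w" using d0 by auto
      qed
    qed
    also have "\<dots> = (\<Sum>z\<in>ibox s (int T) - {\<lambda>_. 0}. 1 / real_of_int (supnorm s z) ^ k)"
    proof (rule sum.cong[OF refl])
      fix z assume z: "z \<in> ibox s (int T) - {\<lambda>_. 0}"
      then have "supnorm s z \<noteq> 0" using supnorm_zero_iff[of z s "int T"] by auto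
      then show "(real d / real_of_int (supnorm s (\<lambda>j. int d * z j))) ^ k = 1 / real_of_int (supnorm s z) ^ k"
        using d0 by (simp add: supnorm_scale power_divide)
    qed
    also have "\<dots> \<le> c * real T ^ (s-k)" unfolding c_def using shell[of k s T] k s by simp
    also have "\<dots> \<le> c * real_of_int Q ^ (s-k) / real d ^ 2"
    proof -
      have "real T \<le> real_of_int Q / real d"
        using Tq d0 by (metis of_int_of_nat_eq real_of_int_div4)
      then have "real T ^ (s-k) \<le> (real_of_int Q / real d) ^ (s-k)" by (rule power_mono) simp
      also have "\<dots> = real_of_int Q ^ (s-k) / real d ^ (s-k)" by (simp add: power_divide)
      also have "\<dots> \<le> real_of_int Q ^ (s-k) / real d ^ 2"
      proof (rule divide_left_mono)
        show "real d ^ 2 \<le> real d ^ (s-k)" using d s by (intro power_increasing) auto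
      qed (use d Q in auto)
      finally show ?thesis unfolding c_def by (simp add: mult_left_mono divide_inverse mult.assoc)
    qed
    finally show ?thesis .
  qed
  have "(\<Sum>x\<in>E. (real_of_int (Gs x s) / real_of_int (supnorm s x)) ^ k) \<le> (\<Sum>x\<in>E. \<Sum>d\<in>{1..nat Q}. h d x)"
    using step1 by (rule sum_mono)
  also have "\<dots> = (\<Sum>d\<in>{1..nat Q}. \<Sum>x\<in>E. h d x)" by (rule sum.swap)
  also have "\<dots> \<le> (\<Sum>d\<in>{1..nat Q}. c * real_of_int Q ^ (s-k) * (1 / real d ^ 2))"
    using step3 by (intro sum_mono) (simp add: divide_inverse)
  also have "\<dots> = c * real_of_int Q ^ (s-k) * (\<Sum>d\<in>{1..nat Q}. 1 / real d ^ 2)" by (simp add: sum_distrib_left)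
  also have "\<dots> \<le> c * real_of_int Q ^ (s-k) * 2"
    using inv_sq_sum2[of "nat Q"] Q by (intro mult_left_mono) (auto simp: c_def)
  finally show ?thesis by (simp add: E_def c_def)
qed


theorem lemma2p3:
  fixes k s :: nat
  assumes "k \<ge> 3" and "s \<ge> k + 2"
  shows "\<exists>C>0. \<forall>A B :: real. A \<ge> 1 \<longrightarrow> B \<ge> 1 \<longrightarrow> B ^ k \<le> A \<longrightarrow>
           real (Xi k s A B) \<le> C * A ^ (s - 1) * B ^ (s - k)"
proof -
  have k1: "k \<ge> 1" using assms by simp
  define c :: real where "c = 2 * (2 * s * 3^(s-1))"
  define K :: real where "K = (2 * real s + 5)^s"
  have c0: "c > 0" using assms by (simp add: c_def)
  have K0: "K > 0" by (simp add: K_def)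
  have "\<forall>A B :: real. A \<ge> 1 \<longrightarrow> B \<ge> 1 \<longrightarrow> B ^ k \<le> A \<longrightarrow>
           real (Xi k s A B) \<le> (K * c) * A ^ (s - 1) * B ^ (s - k)"
  proof (intro allI impI)
    fix A B :: real assume A: "A \<ge> 1" and B: "B \<ge> 1" and BA: "B ^ k \<le> A"
    define P where "P = \<lfloor>A\<rfloor>"
    define Q where "Q = \<lfloor>B\<rfloor>"
    have P1: "P \<ge> 1" and Q1: "Q \<ge> 1" using A B by (auto simp: P_def Q_def le_floor_iff)
    have PA: "real_of_int P \<le> A" and QB: "real_of_int Q \<le> B" by (auto simp: P_def Q_def)
    have "real_of_int (Q ^ k) \<le> A"
    proof -
      have "real_of_int Q ^ k \<le> B ^ k" using QB Q1 by (intro power_mono) auto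
      then show ?thesis using BA by simp
    qed
    then have QP: "Q ^ k \<le> P" by (simp add: P_def le_floor_iff)
    define E where "E = ibox s Q - {\<lambda>_. 0}"
    define N where "N = (\<lambda>x. {a \<in> ibox s P. (\<Sum>j<s. a j * x j ^ k) = 0})"
    have finE: "finite E" using ibox_card[of Q s] Q1 by (simp add: E_def)
    have finN: "\<forall>x\<in>E. finite (N x)" using ibox_card[of P s] P1 by (simp add: N_def)
    have sub: "Xi_set k s A B \<subseteq> (\<lambda>(x,a). (a,x)) ` Sigma E N"
    proof clarify
      fix a x assume ax: "(a, x) \<in> Xi_set k s A B"
      then have z: "\<forall>j\<ge>s. a j = 0 \<and> x j = 0" and eq: "(\<Sum>j<s. a j * x j ^ k) = 0"
        and sa: "real_of_int (supnorm s a) \<le> A" and sx0: "0 < supnorm s x"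
        and sx: "real_of_int (supnorm s x) \<le> B"
        by (auto simp: Xi_set_def)
      have "supnorm s a \<le> P" using sa by (simp add: P_def le_floor_iff)
      then have aP: "a \<in> ibox s P" using z supnorm_ge[of _ s a] by (force simp: ibox_def)
      have "supnorm s x \<le> Q" using sx by (simp add: Q_def le_floor_iff)
      then have xQ: "x \<in> ibox s Q" using z supnorm_ge[of _ s x] by (force simp: ibox_def)
      have "x \<noteq> (\<lambda>_. 0)" using supnorm_zero_iff[OF xQ] sx0 by auto
      then have "(x, a) \<in> Sigma E N" using xQ aP eq by (simp add: E_def N_def)
      then show "(a, x) \<in> (\<lambda>(x,a). (a,x)) ` Sigma E N" by force
    qed
    have "card (Xi_set k s A B) \<le> card ((\<lambda>(x,a). (a,x)) ` Sigma E N)"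
      by (rule card_mono[OF _ sub]) (use finE finN in auto)
    also have "\<dots> \<le> card (Sigma E N)" by (rule card_image_le) (use finE finN in auto)
    also have "\<dots> = (\<Sum>x\<in>E. card (N x))" using finE finN by (rule card_SigmaI)
    finally have c1: "real (Xi k s A B) \<le> (\<Sum>x\<in>E. real (card (N x)))"
      unfolding Xi_def by (metis of_nat_le_iff of_nat_sum)
    also have "\<dots> \<le> (\<Sum>x\<in>E. K * real_of_int P ^ (s - 1) * (real_of_int (Gs x s) / real_of_int (supnorm s x)) ^ k)"
    proof (rule sum_mono)
      fix x assume "x \<in> E"
      then show "real (card (N x)) \<le> K * real_of_int P ^ (s - 1) * (real_of_int (Gs x s) / real_of_int (supnorm s x)) ^ k"
        using perx[OF k1 QP Q1, of x s] by (simp add: E_def N_def K_def)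
    qed
    also have "\<dots> = K * real_of_int P ^ (s - 1) * (\<Sum>x\<in>E. (real_of_int (Gs x s) / real_of_int (supnorm s x)) ^ k)"
      by (simp add: sum_distrib_left)
    also have "\<dots> \<le> K * real_of_int P ^ (s - 1) * (c * real_of_int Q ^ (s-k))"
      using gcd_sum[OF k1 assms(2) Q1] K0 P1 unfolding E_def c_def by (intro mult_left_mono) auto
    also have "\<dots> \<le> K * A ^ (s - 1) * (c * B ^ (s-k))"
    proof -
      have "real_of_int P ^ (s - 1) \<le> A ^ (s - 1)" using PA P1 by (intro power_mono) auto
      moreover have "real_of_int Q ^ (s - k) \<le> B ^ (s - k)" using QB Q1 by (intro power_mono) auto
      ultimately show ?thesis using K0 c0 P1 Q1 A
        by (intro mult_mono mult_left_mono) auto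
    qed
    finally show "real (Xi k s A B) \<le> (K * c) * A ^ (s - 1) * B ^ (s - k)" by (simp add: algebra_simps)
  qed
  then show ?thesis using K0 c0 by (intro exI[of _ "K * c"]) auto
qed


end
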